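(* The class $\{X\in 2^\omega: X \text{ is recursively traceable}\}$ has Hausdorff dimension $0$.
   Context: Fix a recursive canonical enumeration $n\mapsto D_n$ of all finite subsets of $\omega$ (with each $D_n$ uniformly recursive). A set $A\in 2^\omega$ is recursively traceable if there is a computable function $b$ (a bound) such that for every function $f\le_T A$ there is a computable function $g$ with $|D_{g(n)}|\le b(n)$ and $f(n)\in D_{g(n)}$ for all $n\in\omega$. Hausdorff dimension is the classical Hausdorff dimension on Cantor space. *)

theory Defs
  imports Complex_Main "HOL-Library.Extended_Nonnegative_Real"
begin

text \<open>grec A n f: f (applied to argument lists of length n) is a total
  recursive function of arity n relative to the set A (Kleene's
  general recursive functions: basic functions, the characteristic
  function of A, composition, primitive recursion, and minimisation
  applied to regular functions).\<close>

inductive grec :: "(nat \<Rightarrow> bool) \<Rightarrow> nat \<Rightarrow> (nat list \<Rightarrow> nat) \<Rightarrow> bool"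
  for A :: "nat \<Rightarrow> bool" where
  zero: "grec A n (\<lambda>xs. 0)"
| succ: "grec A 1 (\<lambda>xs. Suc (hd xs))"
| proj: "i < n \<Longrightarrow> grec A n (\<lambda>xs. xs ! i)"
| orac: "grec A 1 (\<lambda>xs. if A (hd xs) then 1 else 0)"
| comp: "grec A m g \<Longrightarrow> (\<forall>i<m. grec A n (fs i)) \<Longrightarrow>
           grec A n (\<lambda>xs. g (map (\<lambda>i. fs i xs) [0..<m]))"
| prim_rec: "grec A n g \<Longrightarrow> grec A (n + 2) h \<Longrightarrow>
           grec A (n + 1) (\<lambda>xs. rec_nat (g (tl xs)) (\<lambda>k r. h (k # r # tl xs)) (hd xs))"
| mu: "grec A (n + 1) g \<Longrightarrow> (\<forall>xs. length xs = n \<longrightarrow> (\<exists>y. g (y # xs) = 0)) \<Longrightarrow>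
           grec A n (\<lambda>xs. LEAST y. g (y # xs) = 0)"

definition turing_below :: "(nat \<Rightarrow> nat) \<Rightarrow> (nat \<Rightarrow> bool) \<Rightarrow> bool" where
  "turing_below f A \<longleftrightarrow> (\<exists>g. grec A 1 g \<and> (\<forall>x. f x = g [x]))"

definition computable :: "(nat \<Rightarrow> nat) \<Rightarrow> bool" where
  "computable f \<longleftrightarrow> turing_below f (\<lambda>_. False)"

definition D :: "nat \<Rightarrow> nat set" where
  "D n = {i. bit n i}"

definition recursively_traceable :: "(nat \<Rightarrow> bool) \<Rightarrow> bool" where
  "recursively_traceable A \<longleftrightarrow>
     (\<exists>b. computable b \<and>
        (\<forall>f. turing_below f A \<longrightarrow>
           (\<exists>g. computable g \<and> (\<forall>n. card (D (g n)) \<le> b n \<and> f n \<in> D (g n)))))"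

text \<open>Cantor space 2^omega is nat \<Rightarrow> bool, with the standard metric
  d(X,Y) = 2^(-min{i. X i \<noteq> Y i}); the basic open cylinder of a string
  \<sigma> has diameter 2^(-|\<sigma>|).\<close>

definition cyl :: "bool list \<Rightarrow> (nat \<Rightarrow> bool) set" where
  "cyl \<sigma> = {X. \<forall>i<length \<sigma>. X i = \<sigma> ! i}"

definition hausdorff_measure :: "real \<Rightarrow> (nat \<Rightarrow> bool) set \<Rightarrow> ennreal" where
  "hausdorff_measure s C =
     (SUP m. INF \<sigma>\<in>{\<sigma> :: nat \<Rightarrow> bool list.
                     (\<forall>k. m \<le> length (\<sigma> k)) \<and> C \<subseteq> (\<Union>k. cyl (\<sigma> k))}.
                (\<Sum>k. ennreal (2 powr (- s * real (length (\<sigma> k))))))"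

definition hausdorff_dim :: "(nat \<Rightarrow> bool) set \<Rightarrow> real" where
  "hausdorff_dim C = Inf {s. 0 \<le> s \<and> hausdorff_measure s C = 0}"

end

theory Submission
  imports Defs "HOL-Library.Countable" "HOL-Analysis.Caratheodory"
begin


lemma grec_eq: "grec A n f \<Longrightarrow> f = g \<Longrightarrow> grec A n g" by simp

lemma comp1: "grec A 1 g \<Longrightarrow> grec A n f \<Longrightarrow> grec A n (\<lambda>xs. g [f xs])"
proof -
  assume a: "grec A 1 g" "grec A n f"
  have "grec A n (\<lambda>xs. g (map (\<lambda>i. (\<lambda>_. f) i xs) [0..<1]))"
    by (rule grec.comp) (use a in auto)
  then show ?thesis by simp
qed

lemma comp2: "grec A 2 g \<Longrightarrow> grec A n f1 \<Longrightarrow> grec A n f2 \<Longrightarrow> grec A n (\<lambda>xs. g [f1 xs, f2 xs])"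
proof -
  assume a: "grec A 2 g" "grec A n f1" "grec A n f2"
  have "grec A n (\<lambda>xs. g (map (\<lambda>i. (\<lambda>i. if i = 0 then f1 else f2) i xs) [0..<2]))"
    by (rule grec.comp) (use a in auto)
  then show ?thesis by (simp add: upt_rec)
qed

lemma rec_suc: "rec_nat a (\<lambda>k r. Suc r) n = n + a" by (induction n) auto

lemma grec_add0: "grec A 2 (\<lambda>xs. hd xs + tl xs ! 0)"
proof -
  have "grec A (1+1) (\<lambda>xs. rec_nat ((\<lambda>xs. xs ! 0) (tl xs)) (\<lambda>k r. (\<lambda>xs. Suc (hd [xs ! 1])) (k # r # tl xs)) (hd xs))"
  proof (rule grec.prim_rec)
    show "grec A 1 (\<lambda>xs. xs ! 0)" by (rule grec.proj) simp
    have "grec A (1+2) (\<lambda>xs. xs ! 1)" by (rule grec.proj) simp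
    then show "grec A (1+2) (\<lambda>xs. Suc (hd [xs ! 1]))" by (rule comp1[OF grec.succ])
  qed
  then show ?thesis by (simp add: rec_suc numeral_2_eq_2)
qed

lemma grec_add: "grec A n f1 \<Longrightarrow> grec A n f2 \<Longrightarrow> grec A n (\<lambda>xs. f1 xs + f2 xs)"
  by (drule comp2[OF grec_add0], assumption) simp

lemma rec_add: "rec_nat 0 (\<lambda>k r. r + y) n = n * y" by (induction n) auto

lemma grec_mult0: "grec A 2 (\<lambda>xs. hd xs * tl xs ! 0)"
proof -
  have "grec A (1+1) (\<lambda>xs. rec_nat ((\<lambda>xs. 0) (tl xs)) (\<lambda>k r. (\<lambda>xs. xs ! 1 + xs ! 2) (k # r # tl xs)) (hd xs))"
  proof (rule grec.prim_rec)
    show "grec A 1 (\<lambda>xs. 0)" by (rule grec.zero)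
    have "grec A (1+2) (\<lambda>xs. xs ! 1)" by (rule grec.proj) simp
    moreover have "grec A (1+2) (\<lambda>xs. xs ! 2)" by (rule grec.proj) simp
    ultimately show "grec A (1+2) (\<lambda>xs. xs ! 1 + xs ! 2)" by (rule grec_add)
  qed
  then show ?thesis by (simp add: rec_add numeral_2_eq_2)
qed

lemma grec_mult: "grec A n f1 \<Longrightarrow> grec A n f2 \<Longrightarrow> grec A n (\<lambda>xs. f1 xs * f2 xs)"
  by (drule comp2[OF grec_mult0], assumption) simp

primrec Cd :: "(nat \<Rightarrow> bool) \<Rightarrow> nat \<Rightarrow> nat" where
  "Cd A 0 = 0"
| "Cd A (Suc k) = Cd A k + Cd A k + (if A k then 1 else 0)"

lemma rec_Cd: "rec_nat 0 (\<lambda>k r. r + r + (if A k then 1 else 0)) n = Cd A n" by (induction n) auto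

lemma grec_Cd: "grec A 1 (\<lambda>xs. Cd A (hd xs))"
proof -
  have "grec A (0+1) (\<lambda>xs. rec_nat ((\<lambda>xs. 0) (tl xs)) (\<lambda>k r. (\<lambda>xs. xs ! 1 + xs ! 1 + (if A (hd [xs ! 0]) then 1 else 0)) (k # r # tl xs)) (hd xs))"
  proof (rule grec.prim_rec)
    show "grec A 0 (\<lambda>xs. 0)" by (rule grec.zero)
    have p1: "grec A (0+2) (\<lambda>xs. xs ! 1)" by (rule grec.proj) simp
    have p0: "grec A (0+2) (\<lambda>xs. xs ! 0)" by (rule grec.proj) simp
    show "grec A (0+2) (\<lambda>xs. xs ! 1 + xs ! 1 + (if A (hd [xs ! 0]) then 1 else 0))"
      by (rule grec_add[OF grec_add[OF p1 p1] comp1[OF grec.orac p0]])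
  qed
  then show ?thesis by (simp add: rec_Cd)
qed

lemma grec_False: "grec (\<lambda>_. False) n f \<Longrightarrow> grec A n f"
proof (induction rule: grec.induct)
  case orac then show ?case by (simp add: grec.zero)
next
  case zero show ?case by (rule grec.zero)
next
  case succ show ?case by (rule grec.succ)
next
  case proj then show ?case by (rule grec.proj)
next
  case comp then show ?case by (intro grec.comp) auto
next
  case prim_rec then show ?case by (intro grec.prim_rec) auto
next
  case mu then show ?case by (intro grec.mu) auto
qed

lemma Cd_bit: "i < k \<Longrightarrow> bit (Cd A k) (k - 1 - i) = A i"
proof (induction k arbitrary: i)
  case 0 then show ?case by simp
next
  case (Suc k)
  have e: "Cd A (Suc k) = (if A k then 1 else 0) + 2 * Cd A k" by simp
  show ?case
  proof (cases "i = k")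
    case True then show ?thesis by (simp only: e) (simp add: bit_0)
  next
    case False
    then have "Suc k - 1 - i = Suc (k - 1 - i)" using Suc by auto
    then show ?thesis using Suc False by (simp only: e) (simp add: bit_Suc)
  qed
qed

datatype rt = Zr | Sr | Pr nat | Or | Cr rt "rt list" | Rr rt rt | Mr rt

instance rt :: countable by countable_datatype

fun ev :: "(nat \<Rightarrow> bool) \<Rightarrow> rt \<Rightarrow> nat list \<Rightarrow> nat" where
  "ev A Zr xs = 0"
| "ev A Sr xs = Suc (hd xs)"
| "ev A (Pr i) xs = xs ! i"
| "ev A Or xs = (if A (hd xs) then 1 else 0)"
| "ev A (Cr t ts) xs = ev A t (map (\<lambda>u. ev A u xs) ts)"
| "ev A (Rr g h) xs = rec_nat (ev A g (tl xs)) (\<lambda>k r. ev A h (k # r # tl xs)) (hd xs)"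
| "ev A (Mr g) xs = (LEAST y. ev A g (y # xs) = 0)"

lemma grec_ev: "grec A n f \<Longrightarrow> \<exists>t. f = ev A t"
proof (induction rule: grec.induct)
  case (zero n) then show ?case by (rule exI[of _ Zr]) (simp add: fun_eq_iff)
next
  case succ then show ?case by (rule exI[of _ Sr]) (simp add: fun_eq_iff)
next
  case (proj i n) show ?case by (rule exI[of _ "Pr i"]) (simp add: fun_eq_iff)
next
  case orac then show ?case by (rule exI[of _ Or]) (simp add: fun_eq_iff)
next
  case (comp m g n fs)
  then obtain t where t: "g = ev A t" by blast
  define T where "T i = (SOME t. fs i = ev A t)" for i
  have H: "fs i = ev A (T i)" if "i < m" for i
  proof -
    have "\<exists>t. fs i = ev A t" using comp.IH that by blast
    then show ?thesis unfolding T_def by (rule someI_ex)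
  qed
  have "map (\<lambda>u. ev A u xs) (map T [0..<m]) = map (\<lambda>i. fs i xs) [0..<m]" for xs
    by (simp add: H)
  then have "(\<lambda>xs. g (map (\<lambda>i. fs i xs) [0..<m])) = ev A (Cr t (map T [0..<m]))"
    by (simp add: t fun_eq_iff del: map_map)
  then show ?case by blast
next
  case (prim_rec n g h)
  then obtain t u where "g = ev A t" "h = ev A u" by blast
  then have "(\<lambda>xs. rec_nat (g (tl xs)) (\<lambda>k r. h (k # r # tl xs)) (hd xs)) = ev A (Rr t u)"
    by (simp add: fun_eq_iff)
  then show ?case by blast
next
  case (mu n g)
  then obtain t where "g = ev A t" by blast
  then have "(\<lambda>xs. LEAST y. g (y # xs) = 0) = ev A (Mr t)"
    by (simp add: fun_eq_iff)
  then show ?case by blast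
qed



definition dec :: "nat \<Rightarrow> nat \<Rightarrow> bool list" where
  "dec L x = map (\<lambda>i. bit x (L - 1 - i)) [0..<L]"

abbreviation W :: "real \<Rightarrow> bool list \<Rightarrow> ennreal" where
  "W s \<sigma> \<equiv> ennreal (2 powr (- s * real (length \<sigma>)))"

lemma small_len:
  assumes "0 < s" "0 < d"
  shows "\<exists>l\<ge>m. 1 \<le> s * real l \<and> 2 powr (- s * real l) \<le> d"
proof -
  obtain l :: nat where l: "max (real m) (max (1/s) (- log 2 d / s)) \<le> real l"
    using real_arch_simple by blast
  have "m \<le> l" using l by simp
  moreover have "1 \<le> s * real l" using l assms by (simp add: field_simps)
  moreover have "- log 2 d \<le> s * real l" using l assms by (simp add: field_simps)
  then have "2 powr (- s * real l) \<le> 2 powr (log 2 d)" by simp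
  then have "2 powr (- s * real l) \<le> d" using assms by simp
  ultimately show ?thesis by blast
qed

lemma geo: "0 \<le> e \<Longrightarrow> (\<Sum>n. ennreal (e * (1/2)^Suc n)) = ennreal e"
proof -
  assume e: "0 \<le> e"
  have s: "(\<lambda>n. e * (1/2::real)^Suc n) sums (e * 1)" by (rule sums_mult[OF power_half_series])
  have "(\<Sum>n. ennreal (e * (1/2)^Suc n)) = ennreal (\<Sum>n. e * (1/2)^Suc n)"
    using e s by (intro suminf_ennreal2) (auto simp: sums_summable)
  also have "\<dots> = ennreal e" using s sums_unique by fastforce
  finally show ?thesis .
qed

lemma union_null:
  fixes K :: "nat \<Rightarrow> (nat \<Rightarrow> bool) set"
  assumes s: "0 < s" and C: "C \<subseteq> (\<Union>j. K j)"
    and K: "\<And>j d m. 0 < d \<Longrightarrow> \<exists>\<tau>. (\<forall>i. m \<le> length (\<tau> i)) \<and> K j \<subseteq> (\<Union>i. cyl (\<tau> i))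
                  \<and> (\<Sum>i. W s (\<tau> i)) \<le> ennreal d"
  shows "hausdorff_measure s C = 0"
proof -
  have I: "(INF \<sigma>\<in>{\<sigma> :: nat \<Rightarrow> bool list.
                     (\<forall>k. m \<le> length (\<sigma> k)) \<and> C \<subseteq> (\<Union>k. cyl (\<sigma> k))}.
                (\<Sum>k. ennreal (2 powr (- s * real (length (\<sigma> k)))))) = 0" for m
  proof -
    have "(INF \<sigma>\<in>{\<sigma> :: nat \<Rightarrow> bool list.
                     (\<forall>k. m \<le> length (\<sigma> k)) \<and> C \<subseteq> (\<Union>k. cyl (\<sigma> k))}.
                (\<Sum>k. ennreal (2 powr (- s * real (length (\<sigma> k)))))) \<le> 0"
    proof (rule ennreal_le_epsilon)
      fix e :: real assume e: "0 < e"
      have "\<forall>j::nat. \<exists>\<tau>. (\<forall>i. m \<le> length (\<tau> i)) \<and> K j \<subseteq> (\<Union>i. cyl (\<tau> i))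
                  \<and> (\<Sum>i. W s (\<tau> i)) \<le> ennreal (e * (1/2)^Suc j)"
        using K e by simp
      then obtain \<tau> where \<tau>: "\<And>j. (\<forall>i. m \<le> length (\<tau> j i)) \<and> K j \<subseteq> (\<Union>i. cyl (\<tau> j i))
                  \<and> (\<Sum>i. W s (\<tau> j i)) \<le> ennreal (e * (1/2)^Suc j)"
        by metis
      define \<sigma> where "\<sigma> k = (case prod_decode k of (j, i) \<Rightarrow> \<tau> j i)" for k
      have mem: "\<sigma> \<in> {\<sigma> :: nat \<Rightarrow> bool list.
                     (\<forall>k. m \<le> length (\<sigma> k)) \<and> C \<subseteq> (\<Union>k. cyl (\<sigma> k))}"
      proof safe
        fix k show "m \<le> length (\<sigma> k)" using \<tau> by (auto simp: \<sigma>_def split: prod.split)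
      next
        fix X assume "X \<in> C"
        then obtain j where "X \<in> K j" using C by blast
        then obtain i where "X \<in> cyl (\<tau> j i)" using \<tau> by blast
        moreover have "\<sigma> (prod_encode (j, i)) = \<tau> j i" by (simp add: \<sigma>_def)
        ultimately show "X \<in> (\<Union>k. cyl (\<sigma> k))" by (metis UN_I UNIV_I)
      qed
      have "(INF \<sigma>\<in>{\<sigma> :: nat \<Rightarrow> bool list.
                     (\<forall>k. m \<le> length (\<sigma> k)) \<and> C \<subseteq> (\<Union>k. cyl (\<sigma> k))}.
                (\<Sum>k. ennreal (2 powr (- s * real (length (\<sigma> k)))))) \<le> (\<Sum>k. W s (\<sigma> k))"
        by (rule INF_lower[OF mem])
      also have "\<dots> = (\<Sum>k. (\<lambda>p. W s (case p of (j, i) \<Rightarrow> \<tau> j i)) (prod_decode k))"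
        by (simp add: \<sigma>_def)
      also have "\<dots> = (\<Sum>j. \<Sum>i. W s (\<tau> j i))"
        by (rule suminf_ennreal_2dimen) simp
      also have "\<dots> \<le> (\<Sum>j. ennreal (e * (1/2)^Suc j))"
        by (rule suminf_le) (use \<tau> in auto)
      also have "\<dots> = ennreal e" by (rule geo) (use e in simp)
      finally show "(INF \<sigma>\<in>{\<sigma> :: nat \<Rightarrow> bool list.
                     (\<forall>k. m \<le> length (\<sigma> k)) \<and> C \<subseteq> (\<Union>k. cyl (\<sigma> k))}.
                (\<Sum>k. ennreal (2 powr (- s * real (length (\<sigma> k)))))) \<le> 0 + ennreal e" by simp
    qed
    then show ?thesis by simp
  qed
  have "hausdorff_measure s C = (SUP m::nat. (0::ennreal))" unfolding hausdorff_measure_def by (simp only: I)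
  then show ?thesis by simp
qed

lemma key_ineq:
  assumes s: "0 < s" and n: "1 \<le> s * real n" and c: "c \<le> b"
  shows "real c * 2 powr (- s * real (n * b + n)) \<le> 2 powr (- s * real n)"
proof -
  have "real c \<le> real b" using c by simp
  also have "\<dots> \<le> 2 powr real b"
    using less_exp[of b] by (simp add: powr_realpow less_imp_le)
  finally have c2: "real c \<le> 2 powr real b" .
  have "real b \<le> s * real n * real b" using n by (simp add: mult_le_cancel_right1)
  then have b2: "2 powr (- s * real n * real b) \<le> 2 powr (- real b)" by simp
  have eq: "2 powr (- s * real (n * b + n)) = 2 powr (- s * real n * real b) * 2 powr (- s * real n)"
    by (simp add: powr_add[symmetric] algebra_simps)
  have "real c * 2 powr (- s * real (n * b + n)) \<le> 2 powr real b * (2 powr (- real b) * 2 powr (- s * real n))"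
    unfolding eq by (intro mult_mono c2 mult_right_mono b2) auto
  also have "\<dots> = 2 powr (- s * real n)" by (simp add: powr_add[symmetric] mult.assoc[symmetric])
  finally show ?thesis .
qed

lemma D_finite: "finite (D n)"
proof -
  have "D n \<subseteq> {..<n}"
  proof
    fix i assume "i \<in> D n"
    then have "bit n i" by (simp add: D_def)
    then have "n div 2 ^ i \<noteq> 0" by (auto simp: bit_iff_odd dest: odd_pos)
    then have "2 ^ i \<le> n" by (simp add: div_eq_0_iff)
    then have "i < n" using less_exp[of i] by linarith
    then show "i \<in> {..<n}" by simp
  qed
  then show ?thesis using finite_subset by blast
qed

definition KK :: "(nat \<Rightarrow> nat) \<Rightarrow> (nat \<Rightarrow> nat) \<Rightarrow> (nat \<Rightarrow> bool) set" where
  "KK b g = {X. \<forall>n. card (D (g n)) \<le> b n \<and> (\<exists>x\<in>D (g n). X \<in> cyl (dec (n * b n + n) x))}"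

lemma KK_null:
  assumes s: "0 < s" and d: "0 < d"
  shows "\<exists>\<tau>. (\<forall>i. m \<le> length (\<tau> i)) \<and> KK b g \<subseteq> (\<Union>i. cyl (\<tau> i))
                  \<and> (\<Sum>i. W s (\<tau> i)) \<le> ennreal d"
proof -
  obtain n where n: "m \<le> n" "1 \<le> s * real n" "2 powr (- s * real n) \<le> d / 2"
    using small_len[OF s, of "d/2" m] d by auto
  have "\<forall>i. \<exists>l. m \<le> l \<and> 2 powr (- s * real l) \<le> (d/2) * (1/2)^Suc i"
    using small_len[OF s] d by (metis half_gt_zero mult_pos_pos zero_less_divide_iff zero_less_one zero_less_power)
  then obtain l where l: "\<And>i. m \<le> l i \<and> 2 powr (- s * real (l i)) \<le> (d/2) * (1/2)^Suc i"
    by metis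
  define S where "S = (if KK b g = {} then {} else D (g n))"
  define L where "L = n * b n + n"
  define \<tau> where "\<tau> i = (if i \<in> S then dec L i else replicate (l i) False)" for i
  have fS: "finite S" by (simp add: S_def D_finite)
  have len: "m \<le> length (\<tau> i)" for i
    using l[of i] n by (auto simp: \<tau>_def dec_def L_def)
  have cov: "KK b g \<subseteq> (\<Union>i. cyl (\<tau> i))"
  proof
    fix X assume X: "X \<in> KK b g"
    then have "S = D (g n)" by (auto simp: S_def)
    moreover obtain x where "x \<in> D (g n)" "X \<in> cyl (dec L x)" using X by (auto simp: KK_def L_def)
    ultimately show "X \<in> (\<Union>i. cyl (\<tau> i))" by (auto simp: \<tau>_def)
  qed
  have cardS: "real (card S) * 2 powr (- s * real L) \<le> d / 2"
  proof (cases "KK b g = {}")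
    case True then show ?thesis using d by (simp add: S_def)
  next
    case False
    then obtain X where "X \<in> KK b g" by blast
    then have "card S \<le> b n" by (auto simp: S_def KK_def)
    then have "real (card S) * 2 powr (- s * real L) \<le> 2 powr (- s * real n)"
      unfolding L_def by (rule key_ineq[OF s n(2)])
    then show ?thesis using n(3) by linarith
  qed
  have pt: "W s (\<tau> i) \<le> (if i \<in> S then ennreal (2 powr (- s * real L)) else 0) + ennreal ((d/2) * (1/2)^Suc i)" for i
  proof (cases "i \<in> S")
    case True then show ?thesis by (simp add: \<tau>_def dec_def)
  next
    case False then show ?thesis using l[of i] by (simp add: \<tau>_def ennreal_leI)
  qed
  have "(\<Sum>i. W s (\<tau> i)) \<le> (\<Sum>i. (if i \<in> S then ennreal (2 powr (- s * real L)) else 0) + ennreal ((d/2) * (1/2)^Suc i))"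
    by (rule suminf_le) (use pt in auto)
  also have "\<dots> = (\<Sum>i. (if i \<in> S then ennreal (2 powr (- s * real L)) else 0)) + (\<Sum>i. ennreal ((d/2) * (1/2)^Suc i))"
    by (rule suminf_add[symmetric]) auto
  also have "(\<Sum>i. (if i \<in> S then ennreal (2 powr (- s * real L)) else 0)) = (\<Sum>i\<in>S. (if i \<in> S then ennreal (2 powr (- s * real L)) else 0))"
    by (rule suminf_finite[OF fS]) auto
  also have "\<dots> = (\<Sum>i\<in>S. ennreal (2 powr (- s * real L)))" by simp
  also have "\<dots> = ennreal (real (card S) * 2 powr (- s * real L))"
    by (simp add: ennreal_mult ennreal_of_nat_eq_real_of_nat)
  also have "(\<Sum>i. ennreal ((d/2) * (1/2)^Suc i)) = ennreal (d/2)" by (rule geo) (use d in simp)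
  also have "ennreal (real (card S) * 2 powr (- s * real L)) + ennreal (d/2) \<le> ennreal (d/2) + ennreal (d/2)"
    using cardS by (simp add: ennreal_leI add_mono)
  also have "\<dots> = ennreal d" using d by (simp flip: ennreal_plus)
  finally show ?thesis using len cov by blast
qed



definition bb :: "nat \<Rightarrow> nat \<Rightarrow> nat" where
  "bb j x = ev (\<lambda>_. False) (from_nat (fst (prod_decode j))) [x]"
definition gg :: "nat \<Rightarrow> nat \<Rightarrow> nat" where
  "gg j x = ev (\<lambda>_. False) (from_nat (snd (prod_decode j))) [x]"

lemma Cd_bit': "i < k \<Longrightarrow> bit (Cd A k) (k - Suc i) = A i"
  using Cd_bit[of i k A] by simp

lemma comp_ev: "computable f \<Longrightarrow> \<exists>t. f = (\<lambda>x. ev (\<lambda>_. False) t [x])"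
proof -
  assume "computable f"
  then obtain g where g: "grec (\<lambda>_. False) 1 g" "\<forall>x. f x = g [x]"
    by (auto simp: computable_def turing_below_def)
  obtain t where "g = ev (\<lambda>_. False) t" using grec_ev[OF g(1)] by blast
  then show ?thesis using g(2) by auto
qed

lemma traceable_in:
  assumes "recursively_traceable X"
  shows "X \<in> (\<Union>j. KK (bb j) (gg j))"
proof -
  obtain b where b: "computable b" and tr: "\<And>f. turing_below f X \<Longrightarrow>
           (\<exists>g. computable g \<and> (\<forall>n. card (D (g n)) \<le> b n \<and> f n \<in> D (g n)))"
    using assms unfolding recursively_traceable_def by blast
  obtain g0 where g0: "grec (\<lambda>_. False) 1 g0" "\<forall>x. b x = g0 [x]"
    using b by (auto simp: computable_def turing_below_def)
  define f where "f n = Cd X (n * b n + n)" for n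
  have p0: "grec X 1 (\<lambda>xs. xs ! 0)" by (rule grec.proj) simp
  have m: "grec X 1 (\<lambda>xs. xs ! 0 * g0 xs)" by (rule grec_mult[OF p0 grec_False[OF g0(1)]])
  have a: "grec X 1 (\<lambda>xs. xs ! 0 * g0 xs + xs ! 0)" by (rule grec_add[OF m p0])
  have G: "grec X 1 (\<lambda>xs. Cd X (hd [xs ! 0 * g0 xs + xs ! 0]))"
    by (rule comp1[OF grec_Cd a])
  have "turing_below f X" unfolding turing_below_def
  proof (intro exI conjI)
    show "grec X 1 (\<lambda>xs. Cd X (hd [xs ! 0 * g0 xs + xs ! 0]))" by (rule G)
    show "\<forall>x. f x = Cd X (hd [[x] ! 0 * g0 [x] + [x] ! 0])" by (simp add: f_def g0(2))
  qed
  then obtain g where g: "computable g" "\<And>n. card (D (g n)) \<le> b n \<and> f n \<in> D (g n)"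
    using tr by blast
  obtain t where t: "b = (\<lambda>x. ev (\<lambda>_. False) t [x])" using comp_ev[OF b] by blast
  obtain u where u: "g = (\<lambda>x. ev (\<lambda>_. False) u [x])" using comp_ev[OF g(1)] by blast
  define j where "j = prod_encode (to_nat t, to_nat u)"
  have bj: "bb j = b" by (simp add: j_def bb_def t fun_eq_iff)
  have gj: "gg j = g" by (simp add: j_def gg_def u fun_eq_iff)
  have "X \<in> KK b g"
    unfolding KK_def
  proof (safe)
    fix n
    show "card (D (g n)) \<le> b n" using g(2) by blast
    have "X \<in> cyl (dec (n * b n + n) (f n))"
      by (auto simp: cyl_def dec_def f_def Cd_bit')
    then show "\<exists>x\<in>D (g n). X \<in> cyl (dec (n * b n + n) x)" using g(2) by blast
  qed
  then show ?thesis using bj gj by blast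
qed

theorem mainTheorem4:
  shows "hausdorff_dim {X. recursively_traceable X} = 0"
proof -
  let ?T = "{X. recursively_traceable X}"
  have H: "hausdorff_measure s ?T = 0" if s: "0 < s" for s
  proof (rule union_null[OF s, of _ "\<lambda>j. KK (bb j) (gg j)"])
    show "?T \<subseteq> (\<Union>j. KK (bb j) (gg j))" using traceable_in by blast
  next
    fix j and d :: real and m :: nat assume "0 < d"
    then show "\<exists>\<tau>. (\<forall>i. m \<le> length (\<tau> i)) \<and> KK (bb j) (gg j) \<subseteq> (\<Union>i. cyl (\<tau> i))
                  \<and> (\<Sum>i. W s (\<tau> i)) \<le> ennreal d" by (rule KK_null[OF s])
  qed
  let ?S = "{s. 0 \<le> s \<and> hausdorff_measure s ?T = 0}"
  have "(1::real) \<in> ?S" using H[of 1] by simp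
  then have ne: "?S \<noteq> {}" by blast
  have bdd: "bdd_below ?S" by (rule bdd_belowI[of _ 0]) auto
  have ge: "0 \<le> Inf ?S" by (rule cInf_greatest[OF ne]) auto
  have le: "Inf ?S \<le> 0"
  proof (rule field_le_epsilon)
    fix e :: real assume "0 < e"
    then have "e \<in> ?S" using H by auto
    then show "Inf ?S \<le> 0 + e" using cInf_lower[OF _ bdd] by auto
  qed
  show ?thesis unfolding hausdorff_dim_def using ge le by linarith
qed

end
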